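(* For every $\gamma\in(0,1]$, the ReportNoisyMax mechanism with Laplace scale $b=4/\gamma$ is $\gamma$-approximately truthful.
   Context: Setting: $n$ forecasters, $m$ binary events with outcomes $\vec y\in\{0,1\}^m$; forecaster $i$ has beliefs $p_i\in[0,1]^m$ (believing events independent) and reports $r_i\in[0,1]^m$. Quadratic score $S(q,y)=1-(y-q)^2$. ReportNoisyMax with scale $b>0$: compute $q_j=\sum_tS(r_{jt},y_t)$, draw independent $W_1,\dots,W_n$ with Laplace density $\frac1{2b}e^{-|w|/b}$, and select $\arg\max_j(q_j+W_j)$; $M(R,\vec y)$ is the resulting distribution over winners. $M(R;p_i)=\mathbb{E}_{\vec y\sim p_i}M(R,\vec y)$ with $y_t\sim\mathrm{Bernoulli}(p_{it})$ independently. For fixed $p_i$, $\hat r_i$ strictly dominates $r_i$ if $M(\hat r_i,R_{-i};p_i)_i>M(r_i,R_{-i};p_i)_i$ for all $R_{-i}$; $r_i$ is undominated otherwise. $\gamma$-approximately truthful: for all $p_i$ an undominated report exists and every undominated $r_i$ satisfies $\|r_i-p_i\|_\infty\le\gamma$. *)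

theory Defs
  imports "HOL-Probability.Probability"
begin

text \<open>Forecasters are indexed by 0..<n, events by 0..<m.
  A report profile is R :: nat => nat => real, R j t = report of forecaster j on event t.
  An outcome vector y in {0,1}^m is encoded by the set Y of indices t < m with y_t = 1.\<close>

definition quad_score :: "real \<Rightarrow> real \<Rightarrow> real" where
  "quad_score q y = 1 - (y - q)^2"

definition outcome :: "nat set \<Rightarrow> nat \<Rightarrow> real" where
  "outcome Y t = (if t \<in> Y then 1 else 0)"

definition total_score :: "nat \<Rightarrow> (nat \<Rightarrow> real) \<Rightarrow> nat set \<Rightarrow> real" where
  "total_score m r Y = (\<Sum>t<m. quad_score (r t) (outcome Y t))"

definition laplace :: "real \<Rightarrow> real measure" where
  "laplace b = density lborel (\<lambda>w. ennreal (exp (- \<bar>w\<bar> / b) / (2 * b)))"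

text \<open>Probability that ReportNoisyMax selects forecaster i, for outcome Y.
  Ties occur with probability zero, so selecting i means beating every other score strictly.\<close>
definition rnm_win :: "real \<Rightarrow> nat \<Rightarrow> nat \<Rightarrow> (nat \<Rightarrow> nat \<Rightarrow> real) \<Rightarrow> nat set \<Rightarrow> nat \<Rightarrow> real" where
  "rnm_win b n m R Y i =
     measure (PiM {..<n} (\<lambda>_. laplace b))
       {W \<in> space (PiM {..<n} (\<lambda>_. laplace b)).
          \<forall>j<n. j \<noteq> i \<longrightarrow> total_score m (R j) Y + W j < total_score m (R i) Y + W i}"

definition outcome_prob :: "nat \<Rightarrow> (nat \<Rightarrow> real) \<Rightarrow> nat set \<Rightarrow> real" where
  "outcome_prob m p Y = (\<Prod>t<m. if t \<in> Y then p t else 1 - p t)"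

definition rnm_win_exp :: "real \<Rightarrow> nat \<Rightarrow> nat \<Rightarrow> (nat \<Rightarrow> nat \<Rightarrow> real) \<Rightarrow> (nat \<Rightarrow> real) \<Rightarrow> nat \<Rightarrow> real" where
  "rnm_win_exp b n m R p i = (\<Sum>Y\<in>Pow {..<m}. outcome_prob m p Y * rnm_win b n m R Y i)"

definition valid_vec :: "nat \<Rightarrow> (nat \<Rightarrow> real) \<Rightarrow> bool" where
  "valid_vec m r \<longleftrightarrow> (\<forall>t<m. 0 \<le> r t \<and> r t \<le> 1)"

definition strictly_dominates ::
  "real \<Rightarrow> nat \<Rightarrow> nat \<Rightarrow> nat \<Rightarrow> (nat \<Rightarrow> real) \<Rightarrow> (nat \<Rightarrow> real) \<Rightarrow> (nat \<Rightarrow> real) \<Rightarrow> bool" where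
  "strictly_dominates b n m i p rh r \<longleftrightarrow>
     (\<forall>R. (\<forall>j<n. j \<noteq> i \<longrightarrow> valid_vec m (R j)) \<longrightarrow>
        rnm_win_exp b n m (R(i := r)) p i < rnm_win_exp b n m (R(i := rh)) p i)"

definition undominated ::
  "real \<Rightarrow> nat \<Rightarrow> nat \<Rightarrow> nat \<Rightarrow> (nat \<Rightarrow> real) \<Rightarrow> (nat \<Rightarrow> real) \<Rightarrow> bool" where
  "undominated b n m i p r \<longleftrightarrow>
     \<not> (\<exists>rh. valid_vec m rh \<and> strictly_dominates b n m i p rh r)"

definition approx_truthful :: "real \<Rightarrow> nat \<Rightarrow> nat \<Rightarrow> real \<Rightarrow> bool" where
  "approx_truthful b n m \<gamma> \<longleftrightarrow>
     (\<forall>i<n. \<forall>p. valid_vec m p \<longrightarrow>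
        (\<exists>r. valid_vec m r \<and> undominated b n m i p r) \<and>
        (\<forall>r. valid_vec m r \<and> undominated b n m i p r \<longrightarrow> (\<forall>t<m. \<bar>r t - p t\<bar> \<le> \<gamma>)))"

end

theory Submission
  imports Defs "HOL-Real_Asymp.Real_Asymp"
begin


definition lap :: "real \<Rightarrow> real \<Rightarrow> real" where
  "lap b w = exp (- \<bar>w\<bar> / b) / (2 * b)"

lemma lap_pos: "0 < b \<Longrightarrow> 0 < lap b w"
  by (simp add: lap_def)

lemma laplace_lap: "laplace b = density lborel (\<lambda>w. ennreal (lap b w))"
  by (simp add: laplace_def lap_def)

lemma lap_ratio:
  assumes "0 < b" shows "lap b u \<le> lap b v * exp (\<bar>u - v\<bar> / b)"
proof -
  have "- \<bar>u\<bar> \<le> - \<bar>v\<bar> + \<bar>u - v\<bar>" by simp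
  then have "(- \<bar>u\<bar>) / b \<le> (- \<bar>v\<bar> + \<bar>u - v\<bar>) / b"
    using assms by (intro divide_right_mono) auto
  then have "- \<bar>u\<bar> / b \<le> - \<bar>v\<bar> / b + \<bar>u - v\<bar> / b"
    by (simp add: diff_divide_distrib)
  then have "exp (- \<bar>u\<bar> / b) \<le> exp (- \<bar>v\<bar> / b) * exp (\<bar>u - v\<bar> / b)"
    by (simp add: exp_add[symmetric])
  then show ?thesis using assms by (simp add: lap_def divide_right_mono mult.commute mult.left_commute)
qed

lemma lap_le: "0 < b \<Longrightarrow> lap b w \<le> 1 / (2 * b)"
  by (simp add: lap_def divide_right_mono)

lemma half_int:
  assumes b: "0 < b"
  shows "(\<integral>\<^sup>+x. ennreal (lap b x) * indicator {0 ..} x \<partial>lborel) = ennreal (1/2)"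
proof -
  define F where "F = (\<lambda>x::real. 1 - exp (- x / b) / 2)"
  have m: "lap b \<in> borel_measurable borel" unfolding lap_def by measurable
  have d: "0 \<le> x \<Longrightarrow> (F has_real_derivative lap b x) (at x)" for x
  proof -
    assume x: "0 \<le> x"
    have 1: "(F has_real_derivative (exp (- x / b) * (1/b) / 2)) (at x)"
      unfolding F_def using b by (auto intro!: derivative_eq_intros)
    have 2: "exp (- x / b) * (1/b) / 2 = lap b x" using x b by (simp add: lap_def)
    show ?thesis using 1 2 by simp
  qed
  have nn: "0 \<le> x \<Longrightarrow> 0 \<le> lap b x" for x using b by (simp add: lap_def)
  have l: "(F \<longlongrightarrow> 1) at_top" unfolding F_def using b by real_asymp
  have "(\<integral>\<^sup>+x. ennreal (lap b x) * indicator {0 ..} x \<partial>lborel) = ennreal (1 - F 0)"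
    by (rule nn_integral_FTC_atLeast[OF m d nn l])
  also have "\<dots> = ennreal (1/2)" by (simp add: F_def)
  finally show ?thesis .
qed

lemma lap_measurable[measurable]: "lap b \<in> borel_measurable borel"
  unfolding lap_def by measurable

lemma lap_total:
  assumes b: "0 < b"
  shows "(\<integral>\<^sup>+x. ennreal (lap b x) \<partial>lborel) = 1"
proof -
  have "(\<integral>\<^sup>+x. ennreal (lap b x) \<partial>lborel) =
      (\<integral>\<^sup>+x. ennreal (lap b x) * indicator {0 ..} x + ennreal (lap b x) * indicator {..<0} x \<partial>lborel)"
    by (intro nn_integral_cong) (auto split: split_indicator)
  also have "\<dots> = (\<integral>\<^sup>+x. ennreal (lap b x) * indicator {0 ..} x \<partial>lborel)
      + (\<integral>\<^sup>+x. ennreal (lap b x) * indicator {..<0} x \<partial>lborel)"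
    by (intro nn_integral_add) auto
  also have "(\<integral>\<^sup>+x. ennreal (lap b x) * indicator {..<0} x \<partial>lborel) =
      ennreal \<bar>-1::real\<bar> * (\<integral>\<^sup>+x. ennreal (lap b (0 + -1 * x)) * indicator {..<0} (0 + -1 * x) \<partial>lborel)"
    by (intro nn_integral_real_affine) auto
  also have "\<dots> = (\<integral>\<^sup>+x. ennreal (lap b x) * indicator {0<..} x \<partial>lborel)"
    by (simp, intro nn_integral_cong) (auto simp: lap_def split: split_indicator)
  also have "\<dots> = (\<integral>\<^sup>+x. ennreal (lap b x) * indicator {0..} x \<partial>lborel)"
    by (intro nn_integral_cong_AE) (use AE_lborel_singleton[of 0] in \<open>auto split: split_indicator\<close>)
  finally have "(\<integral>\<^sup>+x. ennreal (lap b x) \<partial>lborel) = ennreal (1/2) + ennreal (1/2)"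
    using half_int[OF b] by simp
  also have "\<dots> = ennreal (1/2 + 1/2)" by (rule ennreal_plus[symmetric]) auto
  finally show ?thesis by simp
qed

lemma prob_space_laplace: "0 < b \<Longrightarrow> prob_space (laplace b)"
  unfolding laplace_lap
  by (intro prob_spaceI) (auto simp: emeasure_density_const lap_total emeasure_density)

lemma sets_laplace[simp]: "sets (laplace b) = sets borel"
  by (simp add: laplace_def)

lemma space_laplace[simp]: "space (laplace b) = UNIV"
  by (simp add: laplace_def)

lemma laplace_up:
  assumes "A \<in> sets borel" "\<And>v. v \<in> A \<Longrightarrow> lap b v \<le> C"
  shows "emeasure (laplace b) A \<le> ennreal C * emeasure lborel A"
proof -
  have "emeasure (laplace b) A = (\<integral>\<^sup>+x. ennreal (lap b x) * indicator A x \<partial>lborel)"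
    unfolding laplace_lap using assms(1) by (subst emeasure_density) auto
  also have "\<dots> \<le> (\<integral>\<^sup>+x. ennreal C * indicator A x \<partial>lborel)"
    using assms(2) by (intro nn_integral_mono) (auto split: split_indicator intro: ennreal_leI)
  also have "\<dots> = ennreal C * emeasure lborel A"
    using assms(1) by (simp add: nn_integral_cmult_indicator)
  finally show ?thesis .
qed

lemma laplace_low:
  assumes "A \<in> sets borel" "\<And>v. v \<in> A \<Longrightarrow> C \<le> lap b v"
  shows "ennreal C * emeasure lborel A \<le> emeasure (laplace b) A"
proof -
  have "ennreal C * emeasure lborel A = (\<integral>\<^sup>+x. ennreal C * indicator A x \<partial>lborel)"
    using assms(1) by (simp add: nn_integral_cmult_indicator)
  also have "\<dots> \<le> (\<integral>\<^sup>+x. ennreal (lap b x) * indicator A x \<partial>lborel)"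
    using assms(2) by (intro nn_integral_mono) (auto split: split_indicator intro: ennreal_leI)
  also have "\<dots> = emeasure (laplace b) A"
    unfolding laplace_lap using assms(1) by (subst emeasure_density) auto
  finally show ?thesis .
qed

lemma interval_compare:
  assumes b: "0 < b" and d0: "0 < d0" and d1: "0 \<le> d1"
    and K: "\<And>u v. u \<in> {a1<..a1+d1} \<Longrightarrow> v \<in> {a0<..a0+d0} \<Longrightarrow> \<bar>u - v\<bar> \<le> K"
  shows "measure (laplace b) {a1<..a1+d1} \<le> d1 / d0 * exp (K / b) * measure (laplace b) {a0<..a0+d0}"
proof -
  interpret Q: prob_space "laplace b" using prob_space_laplace[OF b] .
  define q0 where "q0 = measure (laplace b) {a0<..a0+d0}"
  have q0: "emeasure (laplace b) {a0<..a0+d0} = ennreal q0"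
    unfolding q0_def by (simp add: Q.emeasure_eq_measure)
  have q0nn: "0 \<le> q0" unfolding q0_def by simp
  define C where "C = exp (K / b) * q0 / d0"
  have lapC: "lap b u \<le> C" if u: "u \<in> {a1<..a1+d1}" for u
  proof -
    have "ennreal (lap b u * exp (- K / b)) * emeasure lborel {a0<..a0+d0} \<le> emeasure (laplace b) {a0<..a0+d0}"
    proof (rule laplace_low)
      fix v assume v: "v \<in> {a0<..a0+d0}"
      have "lap b u \<le> lap b v * exp (\<bar>u - v\<bar> / b)" by (rule lap_ratio[OF b])
      also have "\<dots> \<le> lap b v * exp (K / b)"
        using K[OF u v] b lap_pos[OF b, of v] by (auto intro!: mult_left_mono divide_right_mono)
      finally have "lap b u \<le> lap b v * exp (K / b)" .
      then have "lap b u * exp (- K / b) \<le> lap b v * exp (K / b) * exp (- K / b)"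
        by (intro mult_right_mono) auto
      also have "\<dots> = lap b v" by (simp add: mult.assoc exp_add[symmetric])
      finally show "lap b u * exp (- K / b) \<le> lap b v" .
    qed auto
    then have "ennreal (lap b u * exp (- K / b) * d0) \<le> ennreal q0"
      using d0 q0 lap_pos[OF b, of u] by (simp add: ennreal_mult')
    then have "lap b u * exp (- K / b) * d0 \<le> q0"
      using q0nn by (auto simp add: ennreal_le_iff2)
    then have "lap b u * exp (- K / b) * d0 * exp (K / b) / d0 \<le> q0 * exp (K / b) / d0"
      using d0 by (intro divide_right_mono mult_right_mono) auto
    moreover have "lap b u * exp (- K / b) * d0 * exp (K / b) / d0 = lap b u"
      using d0 by (simp add: field_simps exp_add[symmetric])
    ultimately show ?thesis unfolding C_def by (simp add: field_simps)
  qed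
  have up: "emeasure (laplace b) {a1<..a1+d1} \<le> ennreal C * emeasure lborel {a1<..a1+d1}"
    by (rule laplace_up) (auto intro: lapC)
  have C0: "0 \<le> C" unfolding C_def using q0nn d0 by simp
  have "ennreal C * emeasure lborel {a1<..a1+d1} = ennreal C * ennreal d1" using d1 by simp
  also have "\<dots> = ennreal (C * d1)" by (rule ennreal_mult[symmetric]) (use d1 C0 in auto)
  finally have "emeasure (laplace b) {a1<..a1+d1} \<le> ennreal (C * d1)" using up by simp
  then have "measure (laplace b) {a1<..a1+d1} \<le> C * d1"
    using d1 d0 C0 by (auto simp: Q.emeasure_eq_measure ennreal_le_iff2 intro: order_trans[OF _ mult_nonneg_nonneg])
  then show ?thesis unfolding C_def q0_def by (simp add: field_simps)
qed

lemma interval_pos: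
  assumes b: "0 < b" and d0: "0 < d0"
  shows "0 < measure (laplace b) {a0<..a0+d0}"
proof -
  interpret Q: prob_space "laplace b" using prob_space_laplace[OF b] .
  have "ennreal (lap b a0 * exp (- d0 / b)) * emeasure lborel {a0<..a0+d0} \<le> emeasure (laplace b) {a0<..a0+d0}"
  proof (rule laplace_low)
    fix v assume v: "v \<in> {a0<..a0+d0}"
    have "lap b a0 \<le> lap b v * exp (\<bar>a0 - v\<bar> / b)" by (rule lap_ratio[OF b])
    also have "\<dots> \<le> lap b v * exp (d0 / b)"
      using v b lap_pos[OF b, of v] by (auto intro!: mult_left_mono divide_right_mono)
    finally have "lap b a0 \<le> lap b v * exp (d0 / b)" .
    then have "lap b a0 * exp (- d0 / b) \<le> lap b v * exp (d0 / b) * exp (- d0 / b)"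
      by (intro mult_right_mono) auto
    also have "\<dots> = lap b v" by (simp add: mult.assoc exp_add[symmetric])
    finally show "lap b a0 * exp (- d0 / b) \<le> lap b v" .
  qed auto
  then have "ennreal (lap b a0 * exp (- d0 / b) * d0) \<le> ennreal (measure (laplace b) {a0<..a0+d0})"
    using d0 lap_pos[OF b, of a0] by (simp add: ennreal_mult' Q.emeasure_eq_measure)
  then have "lap b a0 * exp (- d0 / b) * d0 \<le> measure (laplace b) {a0<..a0+d0}"
    by (auto simp add: ennreal_le_iff2) (meson measure_nonneg order_trans)
  moreover have "0 < lap b a0 * exp (- d0 / b) * d0" using d0 lap_pos[OF b, of a0] by simp
  ultimately show ?thesis by linarith
qed

lemma interval_lip:
  assumes b: "0 < b" and d: "0 \<le> d"
  shows "measure (laplace b) {a<..a+d} \<le> d / (2 * b)"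
proof -
  interpret Q: prob_space "laplace b" using prob_space_laplace[OF b] .
  have "emeasure (laplace b) {a<..a+d} \<le> ennreal (1 / (2 * b)) * emeasure lborel {a<..a+d}"
    by (rule laplace_up) (auto intro: lap_le[OF b])
  also have "\<dots> = ennreal (1 / (2 * b)) * ennreal d" using d by simp
  also have "\<dots> = ennreal (1 / (2 * b) * d)" by (rule ennreal_mult[symmetric]) (use d b in auto)
  finally have "ennreal (measure (laplace b) {a<..a+d}) \<le> ennreal (d / (2 * b))"
    by (simp add: Q.emeasure_eq_measure)
  moreover have "0 \<le> d / (2 * b)" using d b by simp
  ultimately show ?thesis by (auto simp: ennreal_le_iff2)
qed




locale rnm =
  fixes b :: real and n i :: nat
  assumes b: "0 < b" and n2: "2 \<le> n" and i: "i < n"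
begin

abbreviation "Q \<equiv> laplace b"
abbreviation "PP \<equiv> PiM {..<n} (\<lambda>_. Q)"
abbreviation "Iset \<equiv> {..<n} - {i}"
abbreviation "PI \<equiv> PiM Iset (\<lambda>_. Q)"

definition winset :: "(nat \<Rightarrow> real) \<Rightarrow> real \<Rightarrow> (nat \<Rightarrow> real) set" where
  "winset c x = {W \<in> space PP. \<forall>j<n. j \<noteq> i \<longrightarrow> c j + W j < x + W i}"

definition mx :: "(nat \<Rightarrow> real) \<Rightarrow> (nat \<Rightarrow> real) \<Rightarrow> real" where
  "mx c w = Max ((\<lambda>j. c j + w j) ` Iset)"

lemma Q_prob: "prob_space Q" by (rule prob_space_laplace[OF b])

sublocale PS: product_prob_space "\<lambda>_. Q" Iset
  by (auto simp: product_prob_space_def product_prob_space_axioms_def product_sigma_finite_def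
      Q_prob prob_space_imp_sigma_finite)

lemma PP_prob: "prob_space PP" by (rule prob_space_PiM) (rule Q_prob)

lemma Iset_ne: "Iset \<noteq> {}"
proof -
  have "(if i = 0 then 1 else 0) \<in> Iset" using n2 i by auto
  then show ?thesis by blast
qed

lemma mx_less: "mx c w < z \<longleftrightarrow> (\<forall>j<n. j \<noteq> i \<longrightarrow> c j + w j < z)"
  unfolding mx_def using Iset_ne by (subst Max_less_iff) auto

lemma comp_meas: "j < n \<Longrightarrow> (\<lambda>W. W j) \<in> borel_measurable PP"
proof -
  assume j: "j < n"
  have "(\<lambda>W. W j) \<in> measurable PP Q" by (rule measurable_component_singleton) (use j in auto)
  then show ?thesis using measurable_cong_sets[OF refl sets_laplace[of b]] by metis
qed

lemma winset_sets: "winset c x \<in> sets PP"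
proof -
  have e: "winset c x = {W \<in> space PP. \<forall>j\<in>Iset. c j + W j < x + W i}"
    unfolding winset_def by auto
  have "{W \<in> space PP. c j + W j < x + W i} \<in> sets PP" if j: "j \<in> Iset" for j
  proof -
    have [measurable]: "(\<lambda>W. W j) \<in> borel_measurable PP" "(\<lambda>W. W i) \<in> borel_measurable PP"
      using j i by (auto intro!: comp_meas)
    show ?thesis by measurable
  qed
  then show ?thesis unfolding e by (intro sets.sets_Collect_finite_All) auto
qed

lemma insI: "insert i Iset = {..<n}" using i by auto

lemma key_integral:
  assumes "x \<le> x'"
  shows "(\<integral>\<^sup>+W. ennreal k * indicator (winset c x' - winset c x) W \<partial>PP)
       = (\<integral>\<^sup>+w. ennreal k * emeasure Q {mx c w - x' <.. mx c w - x} \<partial>PI)"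
proof -
  have S[measurable]: "winset c x' - winset c x \<in> sets (PiM (insert i Iset) (\<lambda>_. Q))"
    unfolding insI using winset_sets by (metis sets.Diff)
  have m: "(\<lambda>W. ennreal k * indicator (winset c x' - winset c x) W) \<in> borel_measurable (PiM (insert i Iset) (\<lambda>_. Q))"
    by measurable
  have "(\<integral>\<^sup>+W. ennreal k * indicator (winset c x' - winset c x) W \<partial>PiM (insert i Iset) (\<lambda>_. Q))
     = (\<integral>\<^sup>+w. (\<integral>\<^sup>+y. ennreal k * indicator (winset c x' - winset c x) (w(i := y)) \<partial>Q) \<partial>PI)"
    by (rule PS.product_nn_integral_insert[OF _ _ m]) auto
  then have "(\<integral>\<^sup>+W. ennreal k * indicator (winset c x' - winset c x) W \<partial>PP)
     = (\<integral>\<^sup>+w. (\<integral>\<^sup>+y. ennreal k * indicator (winset c x' - winset c x) (w(i := y)) \<partial>Q) \<partial>PI)"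
    unfolding insI .
  also have "\<dots> = (\<integral>\<^sup>+w. ennreal k * emeasure Q {mx c w - x' <.. mx c w - x} \<partial>PI)"
  proof (rule nn_integral_cong)
    fix w assume w: "w \<in> space PI"
    have sp: "w(i := y) \<in> space PP" for y
      using w i by (auto simp: space_PiM PiE_iff extensional_def)
    have ind: "indicator (winset c x' - winset c x) (w(i := y)) = (indicator {mx c w - x' <.. mx c w - x} y :: ennreal)" for y
    proof -
      have e: "(\<forall>j<n. j \<noteq> i \<longrightarrow> c j + (w(i:=y)) j < z + (w(i:=y)) i) \<longleftrightarrow> mx c w < z + y" for z
        by (simp add: mx_less)
      have "w(i := y) \<in> winset c x' \<longleftrightarrow> mx c w < x' + y"
        using sp[of y] e[of x'] unfolding winset_def by blast
      moreover have "w(i := y) \<in> winset c x \<longleftrightarrow> mx c w < x + y"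
        using sp[of y] e[of x] unfolding winset_def by blast
      ultimately have "w(i := y) \<in> winset c x' - winset c x \<longleftrightarrow> y \<in> {mx c w - x' <.. mx c w - x}"
        by auto
      then show ?thesis unfolding indicator_def by simp
    qed
    have "(\<integral>\<^sup>+y. ennreal k * indicator (winset c x' - winset c x) (w(i := y)) \<partial>Q) =
        (\<integral>\<^sup>+y. ennreal k * indicator {mx c w - x' <.. mx c w - x} y \<partial>Q)"
      by (simp only: ind)
    also have "\<dots> = ennreal k * emeasure Q {mx c w - x' <.. mx c w - x}"
      by (rule nn_integral_cmult_indicator) simp
    finally show "(\<integral>\<^sup>+y. ennreal k * indicator (winset c x' - winset c x) (w(i := y)) \<partial>Q) =
        ennreal k * emeasure Q {mx c w - x' <.. mx c w - x}" .
  qed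
  finally show ?thesis .
qed

lemma inner_eq:
  assumes w: "w \<in> space PI"
  shows "(\<integral>\<^sup>+y. ennreal k * indicator (winset c x' - winset c x) (w(i := y)) \<partial>Q) =
        ennreal k * emeasure Q {mx c w - x' <.. mx c w - x}"
proof -
  have sp: "w(i := y) \<in> space PP" for y
    using w i by (auto simp: space_PiM PiE_iff extensional_def)
  have ind: "indicator (winset c x' - winset c x) (w(i := y)) = (indicator {mx c w - x' <.. mx c w - x} y :: ennreal)" for y
  proof -
    have e: "(\<forall>j<n. j \<noteq> i \<longrightarrow> c j + (w(i:=y)) j < z + (w(i:=y)) i) \<longleftrightarrow> mx c w < z + y" for z
      by (simp add: mx_less)
    have "w(i := y) \<in> winset c x' \<longleftrightarrow> mx c w < x' + y"
      using sp[of y] e[of x'] unfolding winset_def by blast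
    moreover have "w(i := y) \<in> winset c x \<longleftrightarrow> mx c w < x + y"
      using sp[of y] e[of x] unfolding winset_def by blast
    ultimately have "w(i := y) \<in> winset c x' - winset c x \<longleftrightarrow> y \<in> {mx c w - x' <.. mx c w - x}"
      by auto
    then show ?thesis unfolding indicator_def by simp
  qed
  have "(\<integral>\<^sup>+y. ennreal k * indicator (winset c x' - winset c x) (w(i := y)) \<partial>Q) =
      (\<integral>\<^sup>+y. ennreal k * indicator {mx c w - x' <.. mx c w - x} y \<partial>Q)"
    by (simp only: ind)
  also have "\<dots> = ennreal k * emeasure Q {mx c w - x' <.. mx c w - x}"
    by (rule nn_integral_cmult_indicator) simp
  finally show ?thesis .
qed

lemma PPprob: "prob_space PP" by (rule prob_space_PiM) (rule Q_prob)

lemma gain_pos: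
  assumes d: "0 < d"
  shows "0 < measure PP (winset c (x + d) - winset c x)"
proof -
  interpret PPp: prob_space PP by (rule PPprob)
  have S[measurable]: "winset c (x + d) - winset c x \<in> sets (PiM (insert i Iset) (\<lambda>_. Q))"
    unfolding insI using winset_sets by (metis sets.Diff)
  have m: "(\<lambda>W. ennreal 1 * indicator (winset c (x + d) - winset c x) W) \<in> borel_measurable (PiM (insert i Iset) (\<lambda>_. Q))"
    by measurable
  have "(\<integral>\<^sup>+W. ennreal 1 * indicator (winset c (x + d) - winset c x) W \<partial>PiM (insert i Iset) (\<lambda>_. Q))
     = (\<integral>\<^sup>+w. (\<integral>\<^sup>+y. ennreal 1 * indicator (winset c (x + d) - winset c x) (w(i := y)) \<partial>Q) \<partial>PI)"
    by (rule PS.product_nn_integral_insert[OF _ _ m]) auto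
  then have eq: "emeasure PP (winset c (x + d) - winset c x)
     = (\<integral>\<^sup>+w. (\<integral>\<^sup>+y. ennreal 1 * indicator (winset c (x + d) - winset c x) (w(i := y)) \<partial>Q) \<partial>PI)"
    unfolding insI using S[unfolded insI] by simp
  interpret Qp: prob_space Q by (rule Q_prob)
  have fm: "(\<lambda>w. \<integral>\<^sup>+y. ennreal 1 * indicator (winset c (x + d) - winset c x) (w(i := y)) \<partial>Q) \<in> borel_measurable PI"
    by measurable
  have pos: "(\<integral>\<^sup>+y. ennreal 1 * indicator (winset c (x + d) - winset c x) (w(i := y)) \<partial>Q) \<noteq> 0"
    if w: "w \<in> space PI" for w
  proof -
    have "(\<integral>\<^sup>+y. ennreal 1 * indicator (winset c (x + d) - winset c x) (w(i := y)) \<partial>Q)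
        = ennreal 1 * emeasure Q {mx c w - (x + d) <.. mx c w - x}" by (rule inner_eq[OF w])
    also have "{mx c w - (x + d) <.. mx c w - x} = {mx c w - (x + d) <.. mx c w - (x + d) + d}" by simp
    also have "emeasure Q \<dots> = ennreal (measure Q \<dots>)" by (simp add: PS.M.emeasure_eq_measure)
    finally have X: "(\<integral>\<^sup>+y. ennreal 1 * indicator (winset c (x + d) - winset c x) (w(i := y)) \<partial>Q)
       = ennreal 1 * ennreal (measure Q {mx c w - (x + d) <.. mx c w - (x + d) + d})" .
    show ?thesis unfolding X using interval_pos[OF b d, of "mx c w - (x + d)"] by simp
  qed
  have "emeasure PP (winset c (x + d) - winset c x) \<noteq> 0"
  proof
    assume "emeasure PP (winset c (x + d) - winset c x) = 0"
    then have "AE w in PI. (\<integral>\<^sup>+y. ennreal 1 * indicator (winset c (x + d) - winset c x) (w(i := y)) \<partial>Q) = 0"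
      using eq nn_integral_0_iff_AE[OF fm] by simp
    then have "AE w in PI. False"
      using AE_space[of PI] by eventually_elim (use pos in auto)
    then show False using PS.AE_False by simp
  qed
  then have "measure PP (winset c (x + d) - winset c x) \<noteq> 0" by (simp add: PPp.emeasure_eq_measure)
  then show ?thesis using measure_nonneg[of PP] by (simp add: order_less_le)
qed

lemma loss_le:
  assumes mxb: "\<And>w. w \<in> space PI \<Longrightarrow> \<bar>mx cL w - mx cG w\<bar> \<le> 1"
    and xb: "\<bar>xL - xG\<bar> \<le> 1" and dL: "0 \<le> dL" and dG: "0 < dG" and dsum: "dL + dG \<le> 2"
  shows "measure PP (winset cL xL - winset cL (xL - dL))
     \<le> dL / dG * exp (4 / b) * measure PP (winset cG (xG + dG) - winset cG xG)"
proof -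
  interpret PPp: prob_space PP by (rule PPprob)
  define \<kappa> where "\<kappa> = dL / dG * exp (4 / b)"
  have k0: "0 \<le> \<kappa>" unfolding \<kappa>_def using dL dG by simp
  have SL: "winset cL xL - winset cL (xL - dL) \<in> sets PP" using winset_sets by (metis sets.Diff)
  have SG: "winset cG (xG + dG) - winset cG xG \<in> sets PP" using winset_sets by (metis sets.Diff)
  have "emeasure PP (winset cL xL - winset cL (xL - dL))
      = (\<integral>\<^sup>+W. ennreal 1 * indicator (winset cL xL - winset cL (xL - dL)) W \<partial>PP)"
    using SL by simp
  also have "\<dots> = (\<integral>\<^sup>+w. ennreal 1 * emeasure Q {mx cL w - xL <.. mx cL w - (xL - dL)} \<partial>PI)"
    by (rule key_integral) (use dL in simp)
  also have "\<dots> \<le> (\<integral>\<^sup>+w. ennreal \<kappa> * emeasure Q {mx cG w - (xG + dG) <.. mx cG w - xG} \<partial>PI)"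
  proof (rule nn_integral_mono)
    fix w assume w: "w \<in> space PI"
    define a1 where "a1 = mx cL w - xL"
    define a0 where "a0 = mx cG w - (xG + dG)"
    have e1: "{mx cL w - xL <.. mx cL w - (xL - dL)} = {a1<..a1+dL}" unfolding a1_def by (simp add: algebra_simps)
    have e0: "{mx cG w - (xG + dG) <.. mx cG w - xG} = {a0<..a0+dG}" unfolding a0_def by (simp add: algebra_simps)
    have c: "measure Q {a1<..a1+dL} \<le> dL / dG * exp (4 / b) * measure Q {a0<..a0+dG}"
    proof (rule interval_compare[OF b dG dL])
      fix u v assume u: "u \<in> {a1<..a1+dL}" and v: "v \<in> {a0<..a0+dG}"
      show "\<bar>u - v\<bar> \<le> 4"
        using mxb[OF w] xb dsum u v unfolding a1_def a0_def by (auto simp: abs_le_iff)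
    qed
    have "ennreal 1 * emeasure Q {a1<..a1+dL} = ennreal (measure Q {a1<..a1+dL})"
      by (simp add: PS.M.emeasure_eq_measure)
    also have "\<dots> \<le> ennreal (\<kappa> * measure Q {a0<..a0+dG})" using c unfolding \<kappa>_def by (rule ennreal_leI)
    also have "\<dots> = ennreal \<kappa> * emeasure Q {a0<..a0+dG}"
      using k0 by (simp add: PS.M.emeasure_eq_measure ennreal_mult)
    finally show "ennreal 1 * emeasure Q {mx cL w - xL <.. mx cL w - (xL - dL)}
        \<le> ennreal \<kappa> * emeasure Q {mx cG w - (xG + dG) <.. mx cG w - xG}" unfolding e1 e0 .
  qed
  also have "\<dots> = (\<integral>\<^sup>+W. ennreal \<kappa> * indicator (winset cG (xG + dG) - winset cG xG) W \<partial>PP)"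
    by (rule key_integral[symmetric]) (use dG in simp)
  also have "\<dots> = ennreal \<kappa> * emeasure PP (winset cG (xG + dG) - winset cG xG)"
    using SG by (simp add: nn_integral_cmult_indicator)
  also have "\<dots> = ennreal (\<kappa> * measure PP (winset cG (xG + dG) - winset cG xG))"
    using k0 by (simp add: PPp.emeasure_eq_measure ennreal_mult)
  finally have "ennreal (measure PP (winset cL xL - winset cL (xL - dL)))
      \<le> ennreal (\<kappa> * measure PP (winset cG (xG + dG) - winset cG xG))"
    by (simp add: PPp.emeasure_eq_measure)
  moreover have "0 \<le> \<kappa> * measure PP (winset cG (xG + dG) - winset cG xG)" using k0 by simp
  ultimately show ?thesis unfolding \<kappa>_def by (simp add: ennreal_le_iff2) (meson measure_nonneg order_trans)
qed

end



lemma numA: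
  fixes p u \<gamma> :: real
  assumes p0: "0 \<le> p" and u1: "u \<le> 1" and g: "p + \<gamma> < u" and g0: "0 < \<gamma>" and g1: "\<gamma> \<le> 1"
  shows "p * ((1 - p)\<^sup>2 - (1 - u)\<^sup>2) * exp \<gamma> < (1 - p) * (u\<^sup>2 - p\<^sup>2)"
proof -
  define h where "h = u - p"
  have h: "\<gamma> < h" using g unfolding h_def by simp
  have e1: "(1 - p)\<^sup>2 - (1 - u)\<^sup>2 = h * (2 - u - p)" unfolding h_def by (simp add: power2_eq_square algebra_simps)
  have e2: "u\<^sup>2 - p\<^sup>2 = h * (u + p)" unfolding h_def by (simp add: power2_eq_square algebra_simps)
  have e3: "(1 - p) * (u + p) = p * (2 - u - p) + h" unfolding h_def by (simp add: algebra_simps)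
  have ex: "exp \<gamma> \<le> 1 + 2 * \<gamma>"
  proof -
    have "exp \<gamma> \<le> 1 + \<gamma> + \<gamma>\<^sup>2" using exp_bound[of \<gamma>] g0 g1 by simp
    moreover have "\<gamma>\<^sup>2 \<le> \<gamma>" using g0 g1 by (simp add: power2_eq_square mult_left_le_one_le)
    ultimately show ?thesis by simp
  qed
  have A0: "0 \<le> p * (2 - u - p)" using p0 u1 g g0 by simp
  have A1: "p * (2 - u - p) \<le> 1/2"
  proof -
    have "p * (2 - u - p) \<le> p * (2 - 2 * p)" using p0 g g0 by (intro mult_left_mono) auto
    also have "\<dots> \<le> 1/2" using sum_squares_ge_zero[of "2*p - 1" 0] by (simp add: power2_eq_square algebra_simps)
    finally show ?thesis .
  qed
  have "p * (2 - u - p) * exp \<gamma> \<le> p * (2 - u - p) * (1 + 2 * \<gamma>)" using mult_left_mono[OF ex A0] .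
  also have "\<dots> = p * (2 - u - p) + p * (2 - u - p) * (2 * \<gamma>)" by (simp add: algebra_simps)
  also have "\<dots> \<le> p * (2 - u - p) + 1/2 * (2 * \<gamma>)" using A1 g0 by (intro add_left_mono mult_right_mono) auto
  also have "\<dots> < (1 - p) * (u + p)" using e3 h by simp
  finally have "p * (2 - u - p) * exp \<gamma> < (1 - p) * (u + p)" .
  then have "h * (p * (2 - u - p) * exp \<gamma>) < h * ((1 - p) * (u + p))" using h g0 by simp
  then show ?thesis unfolding e1 e2 by (simp add: algebra_simps)
qed

definition opr :: "nat set \<Rightarrow> (nat \<Rightarrow> real) \<Rightarrow> nat set \<Rightarrow> real" where
  "opr S p Z = (\<Prod>s\<in>S. if s \<in> Z then p s else 1 - p s)"

lemma sum_split:
  fixes f :: "nat set \<Rightarrow> real"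
  assumes t: "t < m"
  shows "(\<Sum>Y\<in>Pow {..<m}. outcome_prob m p Y * f Y) =
    (\<Sum>Z\<in>Pow ({..<m} - {t}). opr ({..<m} - {t}) p Z * (p t * f (insert t Z) + (1 - p t) * f Z))"
proof -
  define S where "S = {..<m} - {t}"
  have mS: "{..<m} = insert t S" using t unfolding S_def by auto
  have tS: "t \<notin> S" unfolding S_def by simp
  have fS: "finite S" unfolding S_def by simp
  have op0: "outcome_prob m p Z = (1 - p t) * opr S p Z" if "Z \<in> Pow S" for Z
  proof -
    have "t \<notin> Z" using that tS by auto
    then show ?thesis unfolding outcome_prob_def opr_def mS using fS tS by (simp add: prod.insert)
  qed
  have op1: "outcome_prob m p (insert t Z) = p t * opr S p Z" if "Z \<in> Pow S" for Z
  proof -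
    have "(\<Prod>s\<in>S. if s \<in> insert t Z then p s else 1 - p s) = opr S p Z"
      unfolding opr_def using tS by (intro prod.cong) auto
    then show ?thesis unfolding outcome_prob_def mS using fS tS by (simp add: prod.insert)
  qed
  have "Pow {..<m} = Pow S \<union> insert t ` Pow S" unfolding mS by (rule Pow_insert)
  moreover have "Pow S \<inter> insert t ` Pow S = {}" using tS by auto
  moreover have inj: "inj_on (insert t) (Pow S)" using tS by (auto simp: inj_on_def)
  ultimately have "(\<Sum>Y\<in>Pow {..<m}. outcome_prob m p Y * f Y) =
      (\<Sum>Y\<in>Pow S. outcome_prob m p Y * f Y) + (\<Sum>Y\<in>insert t ` Pow S. outcome_prob m p Y * f Y)"
    using fS by (simp add: sum.union_disjoint)
  also have "(\<Sum>Y\<in>insert t ` Pow S. outcome_prob m p Y * f Y) = (\<Sum>Z\<in>Pow S. outcome_prob m p (insert t Z) * f (insert t Z))"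
    using inj by (simp add: sum.reindex)
  finally show ?thesis
    unfolding S_def[symmetric] using op0 op1 by (simp add: sum.distrib[symmetric] algebra_simps)
qed

lemma opr_nonneg: "(\<And>s. s \<in> S \<Longrightarrow> 0 \<le> p s \<and> p s \<le> 1) \<Longrightarrow> 0 \<le> opr S p Z"
  unfolding opr_def by (intro prod_nonneg) auto

lemma opr_pos: "finite S \<Longrightarrow> (\<And>s. s \<in> S \<Longrightarrow> 0 \<le> p s \<and> p s \<le> 1) \<Longrightarrow> 0 < opr S p {s \<in> S. 1/2 \<le> p s}"
  unfolding opr_def by (intro prod_pos) auto

lemma ts_upd:
  assumes t: "t < m"
  shows "total_score m (r(t := v)) Y = total_score m r Y - quad_score (r t) (outcome Y t) + quad_score v (outcome Y t)"
proof -
  have "total_score m (r(t := v)) Y = quad_score v (outcome Y t) + (\<Sum>s\<in>{..<m} - {t}. quad_score (r s) (outcome Y s))"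
    unfolding total_score_def using t by (subst sum.remove[of _ t]) (auto intro!: sum.cong)
  moreover have "total_score m r Y = quad_score (r t) (outcome Y t) + (\<Sum>s\<in>{..<m} - {t}. quad_score (r s) (outcome Y s))"
    unfolding total_score_def using t by (subst sum.remove[of _ t]) auto
  ultimately show ?thesis by simp
qed

lemma ts_ins:
  assumes t: "t < m" and tZ: "t \<notin> Z"
  shows "total_score m r (insert t Z) = total_score m r Z + (2 * r t - 1)"
proof -
  have "total_score m r (insert t Z) = quad_score (r t) 1 + (\<Sum>s\<in>{..<m} - {t}. quad_score (r s) (outcome Z s))"
    unfolding total_score_def using t by (subst sum.remove[of _ t]) (auto simp: outcome_def intro!: sum.cong)
  moreover have "total_score m r Z = quad_score (r t) 0 + (\<Sum>s\<in>{..<m} - {t}. quad_score (r s) (outcome Z s))"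
    unfolding total_score_def using t tZ by (subst sum.remove[of _ t]) (auto simp: outcome_def)
  ultimately show ?thesis by (simp add: quad_score_def power2_eq_square algebra_simps)
qed

lemma outcome_ins: "outcome (insert t Z) t = 1" "t \<notin> Z \<Longrightarrow> outcome Z t = 0"
  by (auto simp: outcome_def)

context rnm
begin

lemma rnm_win_eq: "rnm_win b n m (R(i := r)) Y i = measure PP (winset (\<lambda>j. total_score m (R j) Y) (total_score m r Y))"
  unfolding rnm_win_def winset_def by (rule arg_cong[where f="measure PP"]) auto

lemma mx_le:
  assumes "\<And>j. j < n \<Longrightarrow> j \<noteq> i \<Longrightarrow> c1 j \<le> c0 j + 1"
  shows "mx c1 w \<le> mx c0 w + 1"
proof -
  have "\<forall>a\<in>(\<lambda>j. c1 j + w j) ` Iset. a \<le> mx c0 w + 1"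
  proof
    fix a assume "a \<in> (\<lambda>j. c1 j + w j) ` Iset"
    then obtain j where j: "j \<in> Iset" and a: "a = c1 j + w j" by auto
    have "c0 j + w j \<le> mx c0 w" unfolding mx_def using j by (intro Max_ge) auto
    then show "a \<le> mx c0 w + 1" using assms[of j] j a by auto
  qed
  then show ?thesis unfolding mx_def[of c1] using Iset_ne by (subst Max_le_iff) auto
qed

lemma mx_close:
  assumes "\<And>j. j < n \<Longrightarrow> j \<noteq> i \<Longrightarrow> \<bar>c1 j - c0 j\<bar> \<le> 1"
  shows "\<bar>mx c1 w - mx c0 w\<bar> \<le> 1"
proof -
  have "mx c1 w \<le> mx c0 w + 1" by (rule mx_le) (use assms in \<open>force simp: abs_le_iff\<close>)
  moreover have "mx c0 w \<le> mx c1 w + 1" by (rule mx_le) (use assms in \<open>force simp: abs_le_iff\<close>)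
  ultimately show ?thesis by (simp add: abs_le_iff)
qed

lemma win_diff:
  assumes "x \<le> x'"
  shows "measure PP (winset c x') - measure PP (winset c x) = measure PP (winset c x' - winset c x)"
proof -
  interpret PPp: prob_space PP by (rule PPprob)
  have "winset c x \<subseteq> winset c x'" unfolding winset_def using assms by force
  then show ?thesis using winset_sets by (simp add: PPp.finite_measure_Diff)
qed

lemma bracket_gen:
  assumes pi0: "0 \<le> \<pi>" and pi1: "\<pi> \<le> 1"
    and close: "\<And>j. j < n \<Longrightarrow> j \<noteq> i \<Longrightarrow> \<bar>cL j - cG j\<bar> \<le> 1"
    and xb: "\<bar>xL - xG\<bar> \<le> 1" and dL: "0 \<le> dL" and dG: "0 < dG" and dsum: "dL + dG \<le> 2"
    and num: "\<pi> * dL * exp (4 / b) < (1 - \<pi>) * dG"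
  shows "0 < \<pi> * (measure PP (winset cL (xL - dL)) - measure PP (winset cL xL))
            + (1 - \<pi>) * (measure PP (winset cG (xG + dG)) - measure PP (winset cG xG))"
proof -
  define L where "L = measure PP (winset cL xL - winset cL (xL - dL))"
  define G where "G = measure PP (winset cG (xG + dG) - winset cG xG)"
  have eL: "measure PP (winset cL (xL - dL)) - measure PP (winset cL xL) = - L"
    unfolding L_def using win_diff[of "xL - dL" xL cL] dL by simp
  have eG: "measure PP (winset cG (xG + dG)) - measure PP (winset cG xG) = G"
    unfolding G_def using win_diff[of xG "xG + dG" cG] dG by simp
  have LG: "L \<le> dL / dG * exp (4 / b) * G"
    unfolding L_def G_def by (rule loss_le) (use mx_close close xb dL dG dsum in auto)
  have G0: "0 < G" unfolding G_def by (rule gain_pos[OF dG])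
  have "\<pi> * L \<le> \<pi> * (dL / dG * exp (4 / b) * G)" using mult_left_mono[OF LG pi0] .
  also have "\<dots> = (\<pi> * dL * exp (4 / b)) / dG * G" by simp
  also have "\<dots> < ((1 - \<pi>) * dG) / dG * G"
    using num dG G0 by (intro mult_strict_right_mono divide_strict_right_mono) auto
  also have "\<dots> = (1 - \<pi>) * G" using dG by simp
  finally show ?thesis unfolding eL eG by simp
qed

lemma bracket_Z:
  assumes g0: "0 < \<gamma>" and g1: "\<gamma> \<le> 1" and bg: "b = 4 / \<gamma>"
    and vp: "valid_vec m p" and vr: "valid_vec m r" and t: "t < m" and far: "\<gamma> < \<bar>r t - p t\<bar>"
    and vR: "\<forall>j<n. j \<noteq> i \<longrightarrow> valid_vec m (R j)" and tZ: "t \<notin> Z"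
  shows "0 < p t * (rnm_win b n m (R(i := r(t := p t))) (insert t Z) i - rnm_win b n m (R(i := r)) (insert t Z) i)
          + (1 - p t) * (rnm_win b n m (R(i := r(t := p t))) Z i - rnm_win b n m (R(i := r)) Z i)"
proof -
  define c1 where "c1 = (\<lambda>j. total_score m (R j) (insert t Z))"
  define c0 where "c0 = (\<lambda>j. total_score m (R j) Z)"
  define x1 where "x1 = total_score m r (insert t Z)"
  define x0 where "x0 = total_score m r Z"
  define u where "u = r t"
  define \<pi> where "\<pi> = p t"
  have u01: "0 \<le> u" "u \<le> 1" using vr t unfolding valid_vec_def u_def by auto
  have p01: "0 \<le> \<pi>" "\<pi> \<le> 1" using vp t unfolding valid_vec_def \<pi>_def by auto
  have e4: "4 / b = \<gamma>" using bg g0 by simp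
  have x10: "x1 = x0 + (2 * u - 1)" unfolding x1_def x0_def u_def by (rule ts_ins[OF t tZ])
  have xb: "\<bar>x1 - x0\<bar> \<le> 1" "\<bar>x0 - x1\<bar> \<le> 1" using x10 u01 by auto
  have cc: "\<bar>c1 j - c0 j\<bar> \<le> 1" "\<bar>c0 j - c1 j\<bar> \<le> 1" if "j < n" "j \<noteq> i" for j
  proof -
    have "0 \<le> R j t" "R j t \<le> 1" using vR that t unfolding valid_vec_def by auto
    moreover have "c1 j = c0 j + (2 * R j t - 1)" unfolding c1_def c0_def by (rule ts_ins[OF t tZ])
    ultimately show "\<bar>c1 j - c0 j\<bar> \<le> 1" "\<bar>c0 j - c1 j\<bar> \<le> 1" by auto
  qed
  have f1: "rnm_win b n m (R(i := r)) (insert t Z) i = measure PP (winset c1 x1)"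
    unfolding c1_def x1_def by (rule rnm_win_eq)
  have f0: "rnm_win b n m (R(i := r)) Z i = measure PP (winset c0 x0)"
    unfolding c0_def x0_def by (rule rnm_win_eq)
  have f1': "rnm_win b n m (R(i := r(t := p t))) (insert t Z) i = measure PP (winset c1 (x1 - quad_score u 1 + quad_score \<pi> 1))"
    unfolding c1_def x1_def u_def \<pi>_def rnm_win_eq ts_upd[OF t] outcome_ins ..
  have f0': "rnm_win b n m (R(i := r(t := p t))) Z i = measure PP (winset c0 (x0 - quad_score u 0 + quad_score \<pi> 0))"
    unfolding c0_def x0_def u_def \<pi>_def rnm_win_eq ts_upd[OF t] outcome_ins(2)[OF tZ] ..
  show ?thesis
  proof (cases "\<pi> < u")
    case True
    then have far': "\<pi> + \<gamma> < u" using far unfolding u_def \<pi>_def by auto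
    define dL where "dL = (1 - \<pi>)\<^sup>2 - (1 - u)\<^sup>2"
    define dG where "dG = u\<^sup>2 - \<pi>\<^sup>2"
    have dL0: "0 \<le> dL" unfolding dL_def using True u01 by (intro diff_ge_0_iff_ge[THEN iffD2] power_mono) auto
    have dG0: "0 < dG" unfolding dG_def using True p01 by (simp add: power_strict_mono)
    have ds: "dL + dG \<le> 2" unfolding dL_def dG_def using u01 p01 by (simp add: power2_eq_square algebra_simps)
    have num: "\<pi> * dL * exp (4 / b) < (1 - \<pi>) * dG"
      unfolding e4 dL_def dG_def using numA[OF p01(1) u01(2) far' g0 g1] .
    have "0 < \<pi> * (measure PP (winset c1 (x1 - dL)) - measure PP (winset c1 x1))
            + (1 - \<pi>) * (measure PP (winset c0 (x0 + dG)) - measure PP (winset c0 x0))"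
      by (rule bracket_gen[OF p01 _ xb(1) dL0 dG0 ds num]) (use cc in auto)
    moreover have e1: "x1 - quad_score u 1 + quad_score \<pi> 1 = x1 - dL"
      unfolding dL_def quad_score_def by (simp add: algebra_simps)
    moreover have e0: "x0 - quad_score u 0 + quad_score \<pi> 0 = x0 + dG"
      unfolding dG_def quad_score_def by (simp add: algebra_simps)
    ultimately show ?thesis unfolding f1 f0 f1' f0' unfolding \<pi>_def[symmetric] e1 e0 by linarith
  next
    case False
    then have far': "(1 - \<pi>) + \<gamma> < 1 - u" using far unfolding u_def \<pi>_def by auto
    define dL where "dL = \<pi>\<^sup>2 - u\<^sup>2"
    define dG where "dG = (1 - u)\<^sup>2 - (1 - \<pi>)\<^sup>2"
    have lt: "u < \<pi>" using far' g0 by simp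
    have dL0: "0 \<le> dL" unfolding dL_def using lt u01 by (intro diff_ge_0_iff_ge[THEN iffD2] power_mono) auto
    have dG0: "0 < dG" unfolding dG_def using lt p01 by (simp add: power_strict_mono)
    have ds: "dL + dG \<le> 2" unfolding dL_def dG_def using u01 p01 by (simp add: power2_eq_square algebra_simps)
    have p01': "0 \<le> 1 - \<pi>" "1 - \<pi> \<le> 1" using p01 by auto
    have num: "(1 - \<pi>) * dL * exp (4 / b) < (1 - (1 - \<pi>)) * dG"
      using numA[OF p01'(1) _ far' g0 g1] u01 unfolding e4 dL_def dG_def by simp
    have "0 < (1 - \<pi>) * (measure PP (winset c0 (x0 - dL)) - measure PP (winset c0 x0))
            + (1 - (1 - \<pi>)) * (measure PP (winset c1 (x1 + dG)) - measure PP (winset c1 x1))"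
      by (rule bracket_gen[OF p01' _ xb(2) dL0 dG0 ds num]) (use cc in auto)
    moreover have e1: "x1 - quad_score u 1 + quad_score \<pi> 1 = x1 + dG"
      unfolding dG_def quad_score_def by (simp add: algebra_simps)
    moreover have e0: "x0 - quad_score u 0 + quad_score \<pi> 0 = x0 - dL"
      unfolding dL_def quad_score_def by (simp add: algebra_simps)
    moreover have "1 - (1 - \<pi>) = \<pi>" by simp
    ultimately show ?thesis unfolding f1 f0 f1' f0' unfolding \<pi>_def[symmetric] e1 e0 by (simp only:)
  qed
qed

lemma dominates:
  assumes g0: "0 < \<gamma>" and g1: "\<gamma> \<le> 1" and bg: "b = 4 / \<gamma>"
    and vp: "valid_vec m p" and vr: "valid_vec m r" and t: "t < m" and far: "\<gamma> < \<bar>r t - p t\<bar>"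
    and vR: "\<forall>j<n. j \<noteq> i \<longrightarrow> valid_vec m (R j)"
  shows "rnm_win_exp b n m (R(i := r)) p i < rnm_win_exp b n m (R(i := r(t := p t))) p i"
proof -
  define S where "S = {..<m} - {t}"
  define f where "f = (\<lambda>Y. rnm_win b n m (R(i := r)) Y i)"
  define f' where "f' = (\<lambda>Y. rnm_win b n m (R(i := r(t := p t))) Y i)"
  define D where "D = (\<lambda>Z. p t * (f' (insert t Z) - f (insert t Z)) + (1 - p t) * (f' Z - f Z))"
  have e: "rnm_win_exp b n m (R(i := r(t := p t))) p i - rnm_win_exp b n m (R(i := r)) p i
      = (\<Sum>Z\<in>Pow S. opr S p Z * D Z)"
    unfolding rnm_win_exp_def sum_split[OF t] S_def[symmetric] f_def[symmetric] f'_def[symmetric]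
      sum_subtractf[symmetric] D_def by (intro sum.cong) (auto simp: algebra_simps f_def f'_def)
  have pS: "\<And>s. s \<in> S \<Longrightarrow> 0 \<le> p s \<and> p s \<le> 1" using vp unfolding S_def valid_vec_def by auto
  have D: "0 < D Z" if "Z \<in> Pow S" for Z
  proof -
    have "t \<notin> Z" using that unfolding S_def by auto
    then show ?thesis unfolding D_def f_def f'_def by (rule bracket_Z[OF g0 g1 bg vp vr t far vR])
  qed
  have "0 < (\<Sum>Z\<in>Pow S. opr S p Z * D Z)"
  proof (rule sum_pos2)
    show "finite (Pow S)" unfolding S_def by simp
    show "{s \<in> S. 1/2 \<le> p s} \<in> Pow S" by auto
    show "0 < opr S p {s \<in> S. 1/2 \<le> p s} * D {s \<in> S. 1/2 \<le> p s}"
    proof (rule mult_pos_pos)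
      show "0 < opr S p {s \<in> S. 1/2 \<le> p s}" by (rule opr_pos[OF _ pS]) (simp add: S_def)
      show "0 < D {s \<in> S. 1/2 \<le> p s}" by (rule D) auto
    qed
    show "\<And>Z. Z \<in> Pow S \<Longrightarrow> 0 \<le> opr S p Z * D Z"
    proof -
      fix Z assume Z: "Z \<in> Pow S"
      have "0 \<le> opr S p Z" by (rule opr_nonneg[OF pS])
      moreover have "0 \<le> D Z" using D[OF Z] by simp
      ultimately show "0 \<le> opr S p Z * D Z" by simp
    qed
  qed
  then show ?thesis using e by simp
qed

end




context rnm
begin

lemma win_lip_le:
  assumes "x \<le> x'"
  shows "measure PP (winset c x') - measure PP (winset c x) \<le> (x' - x) / (2 * b)"
proof -
  interpret PPp: prob_space PP by (rule PPprob)
  have S: "winset c x' - winset c x \<in> sets PP" using winset_sets by (metis sets.Diff)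
  have "emeasure PP (winset c x' - winset c x)
      = (\<integral>\<^sup>+W. ennreal 1 * indicator (winset c x' - winset c x) W \<partial>PP)"
    using S by simp
  also have "\<dots> = (\<integral>\<^sup>+w. ennreal 1 * emeasure Q {mx c w - x' <.. mx c w - x} \<partial>PI)"
    by (rule key_integral[OF assms])
  also have "\<dots> \<le> (\<integral>\<^sup>+w. ennreal ((x' - x) / (2 * b)) \<partial>PI)"
  proof (rule nn_integral_mono)
    fix w
    have "{mx c w - x' <.. mx c w - x} = {mx c w - x' <.. mx c w - x' + (x' - x)}" by simp
    then have "ennreal 1 * emeasure Q {mx c w - x' <.. mx c w - x}
        = ennreal (measure Q {mx c w - x' <.. mx c w - x' + (x' - x)})"
      by (simp add: PS.M.emeasure_eq_measure)
    also have "\<dots> \<le> ennreal ((x' - x) / (2 * b))"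
      using assms by (intro ennreal_leI interval_lip[OF b]) auto
    finally show "ennreal 1 * emeasure Q {mx c w - x' <.. mx c w - x} \<le> ennreal ((x' - x) / (2 * b))" .
  qed
  also have "\<dots> = ennreal ((x' - x) / (2 * b))" by (simp add: PS.emeasure_space_1)
  finally have "ennreal (measure PP (winset c x' - winset c x)) \<le> ennreal ((x' - x) / (2 * b))"
    by (simp add: PPp.emeasure_eq_measure)
  moreover have "0 \<le> (x' - x) / (2 * b)" using assms b by simp
  ultimately have "measure PP (winset c x' - winset c x) \<le> (x' - x) / (2 * b)"
    by (auto simp: ennreal_le_iff2)
  then show ?thesis using win_diff[OF assms] by simp
qed

lemma win_mono: "x \<le> x' \<Longrightarrow> measure PP (winset c x) \<le> measure PP (winset c x')"
proof -
  assume a: "x \<le> x'"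
  have "0 \<le> measure PP (winset c x' - winset c x)" by simp
  then show ?thesis using win_diff[OF a, of c] by linarith
qed

lemma win_cont: "continuous_on UNIV (\<lambda>x. measure PP (winset c x))"
proof (rule lipschitz_on_continuous_on)
  show "(1 / (2 * b))-lipschitz_on UNIV (\<lambda>x. measure PP (winset c x))"
  proof (rule lipschitz_onI)
    fix x y :: real
    show "dist (measure PP (winset c x)) (measure PP (winset c y)) \<le> 1 / (2 * b) * dist x y"
    proof (cases "x \<le> y")
      case True
      then show ?thesis using win_lip_le[OF True, of c] win_mono[OF True, of c]
        by (simp add: dist_real_def abs_if)
    next
      case False
      then have F: "y \<le> x" by simp
      show ?thesis using win_lip_le[OF F, of c] win_mono[OF F, of c] False
        by (simp add: dist_real_def abs_if)
    qed
  qed (use b in simp)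
qed

lemma ts_cont: "continuous_on UNIV (\<lambda>r. total_score m r Y)"
  unfolding total_score_def quad_score_def
  by (intro continuous_intros continuous_on_product_coordinates)

lemma F_cont: "continuous_on UNIV (\<lambda>r. rnm_win_exp b n m (R(i := r)) p i)"
proof -
  have "continuous_on UNIV (\<lambda>r. measure PP (winset (\<lambda>j. total_score m (R j) Y) (total_score m r Y)))" for Y
    by (rule continuous_on_compose2[OF win_cont ts_cont]) auto
  then show ?thesis
    unfolding rnm_win_exp_def rnm_win_eq by (intro continuous_intros) auto
qed

lemma exists_undom:
  assumes vp: "valid_vec m p"
  shows "\<exists>r. valid_vec m r \<and> undominated b n m i p r"
proof -
  define R0 where "R0 = (\<lambda>(j::nat) (t::nat). 0::real)"
  define F where "F = (\<lambda>r. rnm_win_exp b n m (R0(i := r)) p i)"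
  define K where "K = PiE UNIV (\<lambda>t::nat. if t < m then {0..1::real} else {0})"
  have "compactin (product_topology (\<lambda>_. euclidean) UNIV) K"
    unfolding K_def by (subst compactin_PiE) auto
  then have cK: "compact K" by (simp add: euclidean_product_topology)
  have "(\<lambda>_. 0) \<in> K" unfolding K_def by auto
  then have neK: "K \<noteq> {}" by blast
  have cF: "continuous_on K F" unfolding F_def by (rule continuous_on_subset[OF F_cont]) auto
  obtain r where rK: "r \<in> K" and rmax: "\<And>y. y \<in> K \<Longrightarrow> F y \<le> F r"
    using continuous_attains_sup[OF cK neK cF] by blast
  have vr: "valid_vec m r" using rK unfolding K_def valid_vec_def by (auto simp: PiE_iff) (metis atLeastAtMost_iff)+
  have "undominated b n m i p r"
    unfolding undominated_def
  proof
    assume "\<exists>rh. valid_vec m rh \<and> strictly_dominates b n m i p rh r"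
    then obtain rh where vh: "valid_vec m rh" and sd: "strictly_dominates b n m i p rh r" by blast
    have vR0: "\<forall>j<n. j \<noteq> i \<longrightarrow> valid_vec m (R0 j)" unfolding R0_def valid_vec_def by simp
    have lt: "F r < F rh" using sd vR0 unfolding strictly_dominates_def F_def by blast
    define rh' where "rh' = (\<lambda>t. if t < m then rh t else 0)"
    have rh'K: "rh' \<in> K" using vh unfolding K_def rh'_def valid_vec_def by (auto simp: PiE_iff)
    have tse: "total_score m rh Y = total_score m rh' Y" for Y
      unfolding total_score_def rh'_def by (rule sum.cong) auto
    have "F rh = F rh'" unfolding F_def rnm_win_exp_def rnm_win_eq tse ..
    then show False using rmax[OF rh'K] lt by simp
  qed
  then show ?thesis using vr by blast
qed

end

lemma approx_main:
  fixes n m :: nat and \<gamma> :: real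
  assumes "2 \<le> n" and "0 < \<gamma>" and "\<gamma> \<le> 1"
  shows "approx_truthful (4 / \<gamma>) n m \<gamma>"
  unfolding approx_truthful_def
proof (intro allI impI)
  fix i p assume i: "i < n" and vp: "valid_vec m p"
  interpret rnm "4 / \<gamma>" n i using assms i by unfold_locales auto
  have A: "\<exists>r. valid_vec m r \<and> undominated (4 / \<gamma>) n m i p r" by (rule exists_undom[OF vp])
  have B: "\<forall>t<m. \<bar>r t - p t\<bar> \<le> \<gamma>" if "valid_vec m r \<and> undominated (4 / \<gamma>) n m i p r" for r
  proof -
  from that have vr: "valid_vec m r" and ud: "undominated (4 / \<gamma>) n m i p r" by auto
  show "\<forall>t<m. \<bar>r t - p t\<bar> \<le> \<gamma>"
  proof (rule ccontr)
    assume "\<not> (\<forall>t<m. \<bar>r t - p t\<bar> \<le> \<gamma>)"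
    then obtain t where t: "t < m" and far: "\<gamma> < \<bar>r t - p t\<bar>" by force
    have vh: "valid_vec m (r(t := p t))" using vr vp t unfolding valid_vec_def by auto
    have "strictly_dominates (4 / \<gamma>) n m i p (r(t := p t)) r"
      unfolding strictly_dominates_def
      using dominates[OF assms(2,3) refl vp vr t far] by blast
    then show False using ud vh unfolding undominated_def by blast
  qed
  qed
  show "(\<exists>r. valid_vec m r \<and> undominated (4 / \<gamma>) n m i p r) \<and>
      (\<forall>r. valid_vec m r \<and> undominated (4 / \<gamma>) n m i p r \<longrightarrow> (\<forall>t<m. \<bar>r t - p t\<bar> \<le> \<gamma>))"
    using A B by blast
qed


theorem mainTheorem16:
  fixes n m :: nat and \<gamma> :: real
  assumes "2 \<le> n" and "0 < \<gamma>" and "\<gamma> \<le> 1"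
  shows "approx_truthful (4 / \<gamma>) n m \<gamma>"
  using assms by (rule approx_main)

end
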